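(* Let $A\in\mathbb{R}^{n\times d}$, $b\in\mathbb{R}^n$, and linearly independent $z\in\mathbb{R}^d$, $c\in\mathbb{S}^{d-1}$ be such that the shadow on $\operatorname{span}(c,z)$ is non-degenerate. Let $g,m>0$, $R>r>0$ and $k\in\mathbb{N}$ with $(10\log_2(R/r)+16)gm\le d$. Then \[ \big|T^{G(A,b,g)\cap M(A,z,2^kc+z,m)}\big|\le 2\sqrt{\frac{(128\log_2(R/r)+208)(5k+58)(\|z\|+d)}{gm}}+\big|\{I\in F(A,b):\|\pi_{c,z}(x_I)\|\notin[r,R]\}\big|+4k+2, \] where $T^S$ is taken with respect to the shadow path $P(A,b,z,2^kc+z)$.
   Context: For a basis $I$, $x_I=A_I^{-1}b_I$. $F(A,b)$: bases with $A_I$ invertible and $Ax_I\le b$. $G(A,b,g)=\{I\in F(A,b): a_j^\top x_I\le b_j-g\|x_I\|\ \forall j\notin I\}$. $M(A,y,y',m)$: bases $I$ such that some $w\in[y,y']$ has $w^\top A_I^{-1}\ge m$ componentwise. For linearly independent $y,y'$, $P(A,b,y,y')$: bases $I\in F(A,b)$ such that some $w\in[y,y']$ has $w^\top A_I^{-1}\ge0$. $\pi_{y,y'}$: orthogonal projection onto $\operatorname{span}(y,y')$; shadow polygon $\pi_{y,y'}(\{x:Ax\le b\})$. Non-degenerate: the preimage in $\{x:Ax\le b\}$ of each projected basic solution $\pi(x_I)$ on the path is the single point $x_I$. $I'$ is a neighbor of $I$ on the path if the shadow polygon has an edge between their projections. For a set $S$ of bases, $T^S$ is the set of $I\in S$ on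 the path having at least two neighbors in $S$. *)

theory Defs
  imports "HOL-Analysis.Analysis"
begin

text \<open>Matrix A in R^(n x d) is "real^'d^'n"; its row j is A $ j. Bases are subsets
I of the row index type 'n with card I = d.\<close>

definition bases :: "real^'d^'n \<Rightarrow> 'n set set" where
  "bases A = {I. card I = CARD('d)}"

definition invertible_sub :: "real^'d^'n \<Rightarrow> 'n set \<Rightarrow> bool" where
  "invertible_sub A I \<longleftrightarrow> card I = CARD('d) \<and> inj_on (\<lambda>j. A $ j) I
      \<and> independent ((\<lambda>j. A $ j) ` I)"

text \<open>Basic solution x_I = A_I^{-1} b_I: the unique x with a_j . x = b_j for j in I.\<close>
definition xI :: "real^'d^'n \<Rightarrow> real^'n \<Rightarrow> 'n set \<Rightarrow> real^'d" where
  "xI A b I = (THE x. \<forall>j\<in>I. A $ j \<bullet> x = b $ j)"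

definition feasible :: "real^'d^'n \<Rightarrow> real^'n \<Rightarrow> real^'d \<Rightarrow> bool" where
  "feasible A b x \<longleftrightarrow> (\<forall>j. A $ j \<bullet> x \<le> b $ j)"

definition Fset :: "real^'d^'n \<Rightarrow> real^'n \<Rightarrow> 'n set set" where
  "Fset A b = {I \<in> bases A. invertible_sub A I \<and> feasible A b (xI A b I)}"

definition Gset :: "real^'d^'n \<Rightarrow> real^'n \<Rightarrow> real \<Rightarrow> 'n set set" where
  "Gset A b g = {I \<in> Fset A b. \<forall>j. j \<notin> I \<longrightarrow>
      A $ j \<bullet> xI A b I \<le> b $ j - g * norm (xI A b I)}"

text \<open>w^T A_I^{-1} >= m componentwise: the (unique) coefficients lambda with
  lambda^T A_I = w^T, i.e. sum_(j in I) lambda_j a_j = w, are all >= m.\<close>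
definition dual_ge :: "real^'d^'n \<Rightarrow> 'n set \<Rightarrow> real^'d \<Rightarrow> real \<Rightarrow> bool" where
  "dual_ge A I w m \<longleftrightarrow> (\<exists>lam. (\<forall>j\<in>I. lam j \<ge> m) \<and> (\<Sum>j\<in>I. lam j *\<^sub>R A $ j) = w)"

definition Mset :: "real^'d^'n \<Rightarrow> real^'d \<Rightarrow> real^'d \<Rightarrow> real \<Rightarrow> 'n set set" where
  "Mset A y y' m = {I \<in> bases A. invertible_sub A I \<and>
      (\<exists>w\<in>closed_segment y y'. dual_ge A I w m)}"

definition Pset :: "real^'d^'n \<Rightarrow> real^'n \<Rightarrow> real^'d \<Rightarrow> real^'d \<Rightarrow> 'n set set" where
  "Pset A b y y' = {I \<in> Fset A b. \<exists>w\<in>closed_segment y y'. dual_ge A I w 0}"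

definition proj2 :: "real^'d \<Rightarrow> real^'d \<Rightarrow> real^'d \<Rightarrow> real^'d" where
  "proj2 y y' x = (THE p. p \<in> span {y, y'} \<and> (\<forall>v\<in>span {y, y'}. (x - p) \<bullet> v = 0))"

definition shadow :: "real^'d^'n \<Rightarrow> real^'n \<Rightarrow> real^'d \<Rightarrow> real^'d \<Rightarrow> (real^'d) set" where
  "shadow A b y y' = proj2 y y' ` {x. feasible A b x}"

definition nondegenerate :: "real^'d^'n \<Rightarrow> real^'n \<Rightarrow> real^'d \<Rightarrow> real^'d \<Rightarrow> bool" where
  "nondegenerate A b y y' \<longleftrightarrow> (\<forall>I\<in>Pset A b y y'.
      {x. feasible A b x \<and> proj2 y y' x = proj2 y y' (xI A b I)} = {xI A b I})"

definition neighbor :: "real^'d^'n \<Rightarrow> real^'n \<Rightarrow> real^'d \<Rightarrow> real^'d \<Rightarrow> 'n set \<Rightarrow> 'n set \<Rightarrow> bool" where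
  "neighbor A b y y' I I' \<longleftrightarrow> I \<in> Pset A b y y' \<and> I' \<in> Pset A b y y' \<and>
     proj2 y y' (xI A b I) \<noteq> proj2 y y' (xI A b I') \<and>
     closed_segment (proj2 y y' (xI A b I)) (proj2 y y' (xI A b I')) face_of shadow A b y y'"

definition Tset :: "real^'d^'n \<Rightarrow> real^'n \<Rightarrow> real^'d \<Rightarrow> real^'d \<Rightarrow> 'n set set \<Rightarrow> 'n set set" where
  "Tset A b y y' S = {I \<in> S \<inter> Pset A b y y'. 2 \<le> card {I' \<in> S. neighbor A b y y' I I'}}"

end

theory Submission
  imports Defs "HOL-Analysis.Analysis"
begin


lemma span_rows_UNIV:
  fixes A :: "real^'d^'n"
  assumes "invertible_sub A I"
  shows "span ((\<lambda>j. A $ j) ` I) = UNIV"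
proof -
  let ?B = "(\<lambda>j. A $ j) ` I"
  have ind: "independent ?B" and inj: "inj_on (\<lambda>j. A $ j) I" and cI: "card I = CARD('d)"
    using assms unfolding invertible_sub_def by auto
  have fin: "finite ?B" using independent_imp_finite[OF ind] .
  have "card ?B = CARD('d)" using card_image[OF inj] cI by simp
  hence "card ?B = dim (UNIV :: (real^'d) set)" by simp
  hence "UNIV \<subseteq> span ?B" using card_eq_dim[of ?B UNIV] ind fin by auto
  thus ?thesis by auto
qed

lemma orth_all_zero:
  fixes A :: "real^'d^'n"
  assumes "invertible_sub A I" "\<forall>j\<in>I. A $ j \<bullet> y = 0"
  shows "y = 0"
proof -
  have "\<forall>v\<in>span ((\<lambda>j. A $ j) ` I). v \<bullet> y = 0"
  proof
    fix v assume "v \<in> span ((\<lambda>j. A $ j) ` I)"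
    hence "orthogonal y v" by (rule orthogonal_to_span) (use assms(2) in \<open>auto simp: orthogonal_def inner_commute\<close>)
    thus "v \<bullet> y = 0" by (simp add: orthogonal_def inner_commute)
  qed
  hence "y \<bullet> y = 0" using span_rows_UNIV[OF assms(1)] by auto
  thus ?thesis by simp
qed

lemma xI_solves:
  fixes A :: "real^'d^'n"
  assumes "invertible_sub A I"
  shows "\<forall>j\<in>I. A $ j \<bullet> xI A b I = b $ j"
proof -
  let ?B = "(\<lambda>j. A $ j) ` I"
  have ind: "independent ?B" and inj: "inj_on (\<lambda>j. A $ j) I" and cI: "card I = CARD('d)"
    using assms unfolding invertible_sub_def by auto
  have fin: "finite ?B" using independent_imp_finite[OF ind] .
  have finI: "finite I" using fin inj finite_image_iff by blast
  have cB: "card ?B = CARD('d)" using card_image[OF inj] cI by simp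
  have "\<exists>y. y \<noteq> 0 \<and> (\<forall>v\<in>span (?B - {A $ i}). orthogonal y v)" if "i \<in> I" for i
  proof -
    have "independent (?B - {A $ i})" using ind by (meson Diff_subset dependent_mono)
    hence "dim (?B - {A $ i}) = card (?B - {A $ i})" by (rule dim_eq_card_independent)
    also have "\<dots> < CARD('d)" using cB that fin by (simp add: card_Diff_singleton)
    finally have "dim (?B - {A $ i}) < DIM(real^'d)" by simp
    then obtain y where "y \<noteq> 0" "\<And>v. v \<in> span (?B - {A $ i}) \<Longrightarrow> orthogonal y v"
      using orthogonal_to_subspace_exists by blast
    thus ?thesis by blast
  qed
  then obtain Y where Y: "\<And>i. i \<in> I \<Longrightarrow> Y i \<noteq> 0 \<and> (\<forall>v\<in>span (?B - {A $ i}). orthogonal (Y i) v)"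
    by metis
  have Yo: "A $ j \<bullet> Y i = 0" if "i \<in> I" "j \<in> I" "j \<noteq> i" for i j
  proof -
    have "A $ j \<noteq> A $ i" using inj that by (meson inj_on_def)
    hence "A $ j \<in> span (?B - {A $ i})" using that by (auto intro: span_base)
    thus ?thesis using Y[OF that(1)] unfolding orthogonal_def by (metis inner_commute)
  qed
  have Yn: "A $ i \<bullet> Y i \<noteq> 0" if "i \<in> I" for i
  proof
    assume h: "A $ i \<bullet> Y i = 0"
    have "\<forall>j\<in>I. A $ j \<bullet> Y i = 0" using h Yo that by metis
    hence "Y i = 0" using orth_all_zero[OF assms] by blast
    thus False using Y that by blast
  qed
  define x where "x = (\<Sum>i\<in>I. (b $ i / (A $ i \<bullet> Y i)) *\<^sub>R Y i)"
  have sol: "\<forall>j\<in>I. A $ j \<bullet> x = b $ j"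
  proof
    fix j assume j: "j \<in> I"
    have "A $ j \<bullet> x = (\<Sum>i\<in>I. (b $ i / (A $ i \<bullet> Y i)) * (A $ j \<bullet> Y i))"
      unfolding x_def by (simp add: inner_sum_right)
    also have "\<dots> = (b $ j / (A $ j \<bullet> Y j)) * (A $ j \<bullet> Y j)"
      by (rule sum.remove[OF finI j, THEN trans]) (use Yo j in \<open>force intro!: sum.neutral\<close>)
    also have "\<dots> = b $ j" using Yn[OF j] by simp
    finally show "A $ j \<bullet> x = b $ j" .
  qed
  have uniq: "x' = x" if "\<forall>j\<in>I. A $ j \<bullet> x' = b $ j" for x'
  proof -
    have "\<forall>j\<in>I. A $ j \<bullet> (x' - x) = 0" using that sol by (simp add: inner_diff_right)
    hence "x' - x = 0" using orth_all_zero[OF assms] by blast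
    thus ?thesis by simp
  qed
  have "xI A b I = x" unfolding xI_def using sol uniq by (rule the_equality)
  thus ?thesis using sol by simp
qed



lemma proj2_props:
  fixes c z x :: "real^'d"
  shows "proj2 c z x \<in> span {c, z} \<and> (\<forall>v\<in>span {c, z}. (x - proj2 c z x) \<bullet> v = 0)"
proof -
  obtain y q where y: "y \<in> span {c, z}" and q: "\<And>w. w \<in> span {c, z} \<Longrightarrow> orthogonal q w"
    and xq: "x = y + q"
    using orthogonal_subspace_decomp_exists[of "{c, z}" x] by metis
  have P: "y \<in> span {c, z} \<and> (\<forall>v\<in>span {c, z}. (x - y) \<bullet> v = 0)"
    using y q xq by (simp add: orthogonal_def)
  have U: "p = y" if "p \<in> span {c, z} \<and> (\<forall>v\<in>span {c, z}. (x - p) \<bullet> v = 0)" for p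
  proof -
    have "p - y \<in> span {c, z}" using that y by (simp add: span_diff)
    hence "(x - p) \<bullet> (p - y) = 0" "(x - y) \<bullet> (p - y) = 0" using that P by auto
    hence "(p - y) \<bullet> (p - y) = 0"
    proof -
      have "(p - y) = (x - y) - (x - p)" by simp
      hence "(p - y) \<bullet> (p - y) = (x - y) \<bullet> (p - y) - (x - p) \<bullet> (p - y)"
        by (metis inner_diff_left)
      thus ?thesis using \<open>(x - p) \<bullet> (p - y) = 0\<close> \<open>(x - y) \<bullet> (p - y) = 0\<close> by simp
    qed
    thus ?thesis by simp
  qed
  have "proj2 c z x = y" unfolding proj2_def using P U by (rule the_equality)
  thus ?thesis using P by simp
qed

lemma proj2_facts:
  fixes c z x :: "real^'d"
  shows "c \<bullet> x = c \<bullet> proj2 c z x" "z \<bullet> x = z \<bullet> proj2 c z x" "norm (proj2 c z x) \<le> norm x"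
proof -
  let ?p = "proj2 c z x"
  have P: "?p \<in> span {c, z}" "\<forall>v\<in>span {c, z}. (x - ?p) \<bullet> v = 0" using proj2_props by blast+
  have "(x - ?p) \<bullet> c = 0" "(x - ?p) \<bullet> z = 0" using P(2) by (auto intro: span_base)
  hence "c \<bullet> (x - ?p) = 0" "z \<bullet> (x - ?p) = 0" by (simp_all only: inner_commute)
  thus "c \<bullet> x = c \<bullet> ?p" "z \<bullet> x = z \<bullet> ?p" by (simp_all add: inner_diff_right)
  have o: "(x - ?p) \<bullet> ?p = 0" using P by auto
  have "norm x ^ 2 = norm ?p ^ 2 + norm (x - ?p) ^ 2"
  proof -
    have "x = ?p + (x - ?p)" by simp
    hence "norm x ^ 2 = norm (?p + (x - ?p)) ^ 2" by metis
    also have "\<dots> = norm ?p ^ 2 + norm (x - ?p) ^ 2"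
      using o by (intro norm_add_Pythagorean) (simp add: orthogonal_def inner_commute)
    finally show ?thesis .
  qed
  hence "norm ?p ^ 2 \<le> norm x ^ 2" by simp
  thus "norm ?p \<le> norm x" by (simp add: power_mono_iff)
qed



lemma pair_ineq:
  fixes A :: "real^'d^'n"
  assumes I: "invertible_sub A I" and dg: "dual_ge A I w m" and m: "m \<ge> 0"
    and J: "J \<in> Gset A b g" and g: "g \<ge> 0" and IJ: "I \<noteq> J"
  shows "w \<bullet> (xI A b I - xI A b J) \<ge> m * g * norm (xI A b J)"
proof -
  obtain lam where lam: "\<forall>j\<in>I. lam j \<ge> m" "(\<Sum>j\<in>I. lam j *\<^sub>R A $ j) = w"
    using dg unfolding dual_ge_def by blast
  have JF: "J \<in> Fset A b" and Jg: "\<forall>j. j \<notin> J \<longrightarrow> A $ j \<bullet> xI A b J \<le> b $ j - g * norm (xI A b J)"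
    using J unfolding Gset_def by auto
  have feas: "\<forall>j. A $ j \<bullet> xI A b J \<le> b $ j" using JF unfolding Fset_def feasible_def by auto
  have cJ: "card J = CARD('d)" using JF unfolding Fset_def invertible_sub_def by auto
  have cI: "card I = CARD('d)" using I unfolding invertible_sub_def by auto
  have finI: "finite I" "finite J" by simp_all
  obtain i0 where i0: "i0 \<in> I" "i0 \<notin> J"
  proof -
    have "\<not> I \<subseteq> J"
    proof
      assume "I \<subseteq> J"
      hence "I = J" using card_subset_eq[OF finI(2)] cI cJ by simp
      thus False using IJ by simp
    qed
    thus ?thesis using that by blast
  qed
  have sol: "\<forall>j\<in>I. A $ j \<bullet> xI A b I = b $ j" using xI_solves[OF I] .
  have "w \<bullet> (xI A b I - xI A b J) = (\<Sum>j\<in>I. lam j * (A $ j \<bullet> (xI A b I - xI A b J)))"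
    unfolding lam(2)[symmetric] by (simp add: inner_sum_left)
  also have "\<dots> = (\<Sum>j\<in>I. lam j * (b $ j - A $ j \<bullet> xI A b J))"
    using sol by (intro sum.cong) (auto simp: inner_diff_right)
  finally have eq: "w \<bullet> (xI A b I - xI A b J) = (\<Sum>j\<in>I. lam j * (b $ j - A $ j \<bullet> xI A b J))" .
  have nn: "\<forall>j\<in>I. 0 \<le> lam j * (b $ j - A $ j \<bullet> xI A b J)"
  proof
    fix j assume "j \<in> I"
    hence "0 \<le> lam j" "0 \<le> b $ j - A $ j \<bullet> xI A b J" using lam(1) m feas[rule_format, of j] by auto
    thus "0 \<le> lam j * (b $ j - A $ j \<bullet> xI A b J)" by simp
  qed
  have "lam i0 * (b $ i0 - A $ i0 \<bullet> xI A b J) \<le> (\<Sum>j\<in>I. lam j * (b $ j - A $ j \<bullet> xI A b J))"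
    by (rule member_le_sum[OF i0(1) _ finI(1)]) (use nn in auto)
  moreover have "m * g * norm (xI A b J) \<le> lam i0 * (b $ i0 - A $ i0 \<bullet> xI A b J)"
  proof -
    have s: "g * norm (xI A b J) \<le> b $ i0 - A $ i0 \<bullet> xI A b J" using Jg[rule_format, OF i0(2)] by linarith
    have l: "m \<le> lam i0" using lam(1) i0(1) by blast
    have gn: "0 \<le> g * norm (xI A b J)" using g by simp
    have "m * (g * norm (xI A b J)) \<le> lam i0 * (g * norm (xI A b J))"
      using mult_right_mono[OF l gn] .
    also have "\<dots> \<le> lam i0 * (b $ i0 - A $ i0 \<bullet> xI A b J)"
      by (rule mult_left_mono[OF s]) (use l m in linarith)
    finally show ?thesis by (simp add: mult.assoc)
  qed
  ultimately show ?thesis unfolding eq by (rule order_trans[rotated])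
qed



lemma cs_count:
  fixes X Y :: "'a \<Rightarrow> real"
  assumes fin: "finite E" and k: "\<kappa> > 0" and XY: "\<And>e. e \<in> E \<Longrightarrow> \<kappa> \<le> X e * Y e"
    and X0: "\<And>e. e \<in> E \<Longrightarrow> 0 \<le> X e" and Y0: "\<And>e. e \<in> E \<Longrightarrow> 0 \<le> Y e"
    and SA: "sum X E \<le> A" and SB: "sum Y E \<le> B" and A0: "0 \<le> A" and B0: "0 \<le> B"
  shows "real (card E) \<le> sqrt (A * B / \<kappa>)"
proof (cases "E = {}")
  case True thus ?thesis using A0 B0 k by simp
next
  case False
  then obtain e0 where e0: "e0 \<in> E" by blast
  have "0 < X e0 * Y e0" using XY[OF e0] k by linarith
  hence "X e0 > 0" "Y e0 > 0" using X0[OF e0] Y0[OF e0]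
    by (auto simp: zero_less_mult_iff)
  have "X e0 \<le> sum X E" by (rule member_le_sum[OF e0 _ fin]) (use X0 in auto)
  hence Ap: "A > 0" using SA \<open>X e0 > 0\<close> by linarith
  have "Y e0 \<le> sum Y E" by (rule member_le_sum[OF e0 _ fin]) (use Y0 in auto)
  hence Bp: "B > 0" using SB \<open>Y e0 > 0\<close> by linarith
  define \<alpha> where "\<alpha> = sqrt B / sqrt A"
  have ap: "\<alpha> > 0" unfolding \<alpha>_def using Ap Bp by simp
  have each: "2 * sqrt \<kappa> \<le> \<alpha> * X e + Y e / \<alpha>" if e: "e \<in> E" for e
  proof -
    have sq: "(\<alpha> * X e + Y e / \<alpha>)\<^sup>2 = (\<alpha> * X e - Y e / \<alpha>)\<^sup>2 + 4 * (X e * Y e)"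
      using ap by (simp add: power2_eq_square field_simps)
    hence "4 * \<kappa> \<le> (\<alpha> * X e + Y e / \<alpha>)\<^sup>2" using XY[OF e] by (smt (verit) zero_le_power2)
    hence "sqrt (4 * \<kappa>) \<le> sqrt ((\<alpha> * X e + Y e / \<alpha>)\<^sup>2)" by (rule real_sqrt_le_mono)
    moreover have "sqrt ((\<alpha> * X e + Y e / \<alpha>)\<^sup>2) = \<alpha> * X e + Y e / \<alpha>"
      using ap X0[OF e] Y0[OF e] by simp
    moreover have "sqrt (4 * \<kappa>) = 2 * sqrt \<kappa>" by (simp add: real_sqrt_mult)
    ultimately show ?thesis by simp
  qed
  have "(\<Sum>e\<in>E. 2 * sqrt \<kappa>) \<le> (\<Sum>e\<in>E. \<alpha> * X e + Y e / \<alpha>)"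
    by (rule sum_mono) (rule each)
  also have "\<dots> = \<alpha> * sum X E + sum Y E / \<alpha>"
    by (simp add: sum.distrib sum_distrib_left sum_divide_distrib)
  also have "\<dots> \<le> \<alpha> * A + B / \<alpha>"
    using SA SB ap by (intro add_mono mult_left_mono divide_right_mono) auto
  also have "\<alpha> * A = sqrt A * sqrt B"
    unfolding \<alpha>_def using Ap by (simp add: field_simps)
  also have "B / \<alpha> = sqrt A * sqrt B"
    unfolding \<alpha>_def using Ap Bp by (simp add: field_simps)
  finally have "real (card E) * (2 * sqrt \<kappa>) \<le> 2 * (sqrt A * sqrt B)" by simp
  hence "real (card E) * sqrt \<kappa> \<le> sqrt (A * B)" by (simp add: real_sqrt_mult)
  hence "real (card E) \<le> sqrt (A * B) / sqrt \<kappa>" using k by (simp add: field_simps)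
  thus ?thesis by (simp add: real_sqrt_divide)
qed

definition Gp :: "real \<Rightarrow> real \<Rightarrow> real" where
  "Gp s \<phi> = sgn \<phi> * ln ((\<bar>\<phi>\<bar> + s) / s)"

lemma ln_ge_1_minus_inv: "0 < y \<Longrightarrow> 1 - 1 / y \<le> ln (y::real)"
  using ln_le_minus_one[of "1 / y"] by (simp add: ln_div)

lemma Gp_diff:
  assumes s: "s > 0" and ab: "a \<le> b"
  shows "(b - a) / (max \<bar>a\<bar> \<bar>b\<bar> + s) \<le> Gp s b - Gp s a"
proof -
  let ?M = "max \<bar>a\<bar> \<bar>b\<bar> + s"
  have Mp: "?M > 0" using s by linarith
  have L: "(u - v) / (u + s) \<le> ln ((u + s) / s) - ln ((v + s) / s)" if "0 \<le> v" "v \<le> u" for u v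
  proof -
    have "ln ((u + s) / s) - ln ((v + s) / s) = ln ((u + s) / (v + s))"
      using s that by (simp add: ln_div)
    moreover have "1 - 1 / ((u + s) / (v + s)) \<le> ln ((u + s) / (v + s))"
      using s that by (intro ln_ge_1_minus_inv) auto
    moreover have "1 - 1 / ((u + s) / (v + s)) = (u - v) / (u + s)"
      using s that by (simp add: field_simps)
    ultimately show ?thesis by simp
  qed
  show ?thesis
  proof (cases "0 \<le> a")
    case True
    hence "Gp s b - Gp s a = ln ((b + s) / s) - ln ((a + s) / s)"
      using ab s by (cases "a = 0"; cases "b = 0") (auto simp: Gp_def)
    moreover have "?M = b + s" using True ab by simp
    ultimately show ?thesis using L[of a b] True ab by simp
  next
    case False
    show ?thesis
    proof (cases "b \<le> 0")
      case True
      hence "Gp s b - Gp s a = ln ((-a + s) / s) - ln ((-b + s) / s)"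
        using ab s False by (cases "b = 0") (auto simp: Gp_def)
      moreover have "?M = -a + s" using True False ab by simp
      moreover have "b - a = (-a) - (-b)" by simp
      ultimately show ?thesis using L[of "-b" "-a"] True ab by simp
    next
      case bp: False
      have G: "Gp s b - Gp s a = ln ((b + s) / s) + ln ((-a + s) / s)"
        using bp False by (auto simp: Gp_def)
      have l1: "b / (b + s) \<le> ln ((b + s) / s)" using L[of 0 b] bp s by simp
      have l2: "(-a) / (-a + s) \<le> ln ((-a + s) / s)" using L[of 0 "-a"] False s by simp
      have "b / ?M \<le> b / (b + s)" using bp s by (intro divide_left_mono) auto
      moreover have "(-a) / ?M \<le> (-a) / (-a + s)" using False s by (intro divide_left_mono) auto
      moreover have "(b - a) / ?M = b / ?M + (-a) / ?M" by (simp add: diff_divide_distrib)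
      ultimately show ?thesis using G l1 l2 by linarith
    qed
  qed
qed

lemma Gp_bound:
  assumes s: "s > 0" and "\<bar>\<phi>\<bar> \<le> B"
  shows "\<bar>Gp s \<phi>\<bar> \<le> ln ((B + s) / s)"
proof -
  have "0 \<le> ln ((\<bar>\<phi>\<bar> + s) / s)" using s by simp
  moreover have "ln ((\<bar>\<phi>\<bar> + s) / s) \<le> ln ((B + s) / s)" using s assms(2) by (simp add: divide_right_mono)
  ultimately show ?thesis unfolding Gp_def by (cases "\<phi> = 0") (auto simp: sgn_if abs_mult)
qed



lemma telescope_subset:
  fixes f :: "nat \<Rightarrow> real"
  assumes "\<And>i. i < N \<Longrightarrow> 0 \<le> f (Suc i) - f i" "E \<subseteq> {..<N}"
  shows "(\<Sum>i\<in>E. f (Suc i) - f i) \<le> f N - f 0"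
proof -
  have "(\<Sum>i\<in>E. f (Suc i) - f i) \<le> (\<Sum>i<N. f (Suc i) - f i)"
    by (rule sum_mono2) (use assms in auto)
  also have "\<dots> = f N - f 0" by (rule sum_lessThan_telescope)
  finally show ?thesis .
qed

lemma sum_subset_le:
  fixes f :: "nat \<Rightarrow> real"
  assumes "\<And>i. i < N \<Longrightarrow> 0 \<le> f i" "E \<subseteq> {..<N}"
  shows "(\<Sum>i\<in>E. f i) \<le> (\<Sum>i<N. f i)"
  by (rule sum_mono2) (use assms in auto)

lemma seq_count:
  fixes t C Z P :: "nat \<Rightarrow> real" and N k :: nat and r R \<kappa> \<zeta> :: real
  assumes r: "r > 0" and R: "R \<ge> r" and k: "\<kappa> > 0" and z: "\<zeta> > 0"
    and pt: "\<And>i. i \<le> N \<Longrightarrow> 0 \<le> t i \<and> t i \<le> 2 ^ k \<and> r \<le> P i \<and> P i \<le> R \<and> \<bar>C i\<bar> \<le> P i \<and> \<bar>Z i\<bar> \<le> \<zeta> * P i"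
    and inc: "\<And>i. i < N \<Longrightarrow> t i < t (Suc i)"
    and h1: "\<And>i. i < N \<Longrightarrow> \<kappa> * P (Suc i) \<le> Z i - Z (Suc i) + t i * (C i - C (Suc i))"
    and h2: "\<And>i. i < N \<Longrightarrow> \<kappa> * P i \<le> Z (Suc i) - Z i + t (Suc i) * (C (Suc i) - C i)"
  shows "real N \<le> 2 + real k + sqrt (4 * \<zeta> * ln ((R + r) / r) * (real k * ln 2) / \<kappa>)
           + sqrt (4 * ln ((R + r) / r) / \<kappa>)"
proof -
  define \<Lambda> where "\<Lambda> = ln ((R + r) / r)"
  have \<Lambda>0: "0 \<le> \<Lambda>" unfolding \<Lambda>_def using r R by simp
  define dt where "dt i = t (Suc i) - t i" for i
  define dC where "dC i = C (Suc i) - C i" for i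
  define dZ where "dZ i = Z i - Z (Suc i)" for i
  define \<rho> where "\<rho> i = P i + P (Suc i)" for i
  define XC where "XC i = dC i / \<rho> i" for i
  define XZ where "XZ i = dZ i / \<rho> i" for i
  define gC where "gC i = Gp r (C i)" for i
  define gZ where "gZ i = Gp (\<zeta> * r) (- Z i)" for i
  define h where "h i = ln (max 1 (t i))" for i
  define q where "q i = min (t i) 2" for i
  have zr: "\<zeta> * r > 0" using z r by simp
  have P1: "\<kappa> * \<rho> i \<le> dt i * dC i" if i: "i < N" for i
  proof -
    have "dt i * dC i = t (Suc i) * (C (Suc i) - C i) + t i * (C i - C (Suc i))"
      unfolding dt_def dC_def by (simp add: algebra_simps)
    thus ?thesis using h1[OF i] h2[OF i] unfolding \<rho>_def by (simp add: distrib_left)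
  qed
  have ptI: "0 \<le> t i \<and> t i \<le> 2 ^ k \<and> r \<le> P i \<and> P i \<le> R \<and> \<bar>C i\<bar> \<le> P i \<and> \<bar>Z i\<bar> \<le> \<zeta> * P i"
    and ptS: "0 \<le> t (Suc i) \<and> t (Suc i) \<le> 2 ^ k \<and> r \<le> P (Suc i) \<and> P (Suc i) \<le> R \<and> \<bar>C (Suc i)\<bar> \<le> P (Suc i) \<and> \<bar>Z (Suc i)\<bar> \<le> \<zeta> * P (Suc i)"
    if "i < N" for i using pt that by auto
  have rho: "\<rho> i \<ge> 2 * r" if "i < N" for i using ptI[OF that] ptS[OF that] unfolding \<rho>_def by linarith
  have dtp: "dt i > 0" if "i < N" for i using inc[OF that] unfolding dt_def by simp
  have dCp: "dC i > 0" if i: "i < N" for i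
  proof -
    have "0 < \<kappa> * \<rho> i" using k rho[OF i] r by simp
    hence "0 < dt i * dC i" using P1[OF i] by linarith
    thus ?thesis using dtp[OF i] by (simp add: zero_less_mult_iff)
  qed
  have P3: "t i * dC i \<le> dZ i" if i: "i < N" for i
  proof -
    have "0 \<le> \<kappa> * P (Suc i)" using k ptS[OF i] r by simp
    moreover have "t i * (C i - C (Suc i)) = - (t i * dC i)" unfolding dC_def by (simp add: algebra_simps)
    ultimately show ?thesis using h1[OF i] unfolding dZ_def by linarith
  qed
  have XC0: "0 \<le> XC i" if "i < N" for i unfolding XC_def using dCp[OF that] rho[OF that] r by simp
  have XZ0: "0 \<le> XZ i" if i: "i < N" for i
  proof -
    have "0 \<le> t i * dC i" using ptI[OF i] dCp[OF i] by simp
    thus ?thesis unfolding XZ_def using P3[OF i] rho[OF i] r by simp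
  qed
  have XCg: "XC i \<le> gC (Suc i) - gC i" if i: "i < N" for i
  proof -
    have M: "max \<bar>C i\<bar> \<bar>C (Suc i)\<bar> + r \<le> \<rho> i" using ptI[OF i] ptS[OF i] unfolding \<rho>_def by linarith
    have "XC i \<le> dC i / (max \<bar>C i\<bar> \<bar>C (Suc i)\<bar> + r)"
      unfolding XC_def using dCp[OF i] M r by (intro divide_left_mono) auto
    also have "\<dots> \<le> gC (Suc i) - gC i" unfolding gC_def dC_def
      using Gp_diff[OF r, of "C i" "C (Suc i)"] dCp[OF i] unfolding dC_def by simp
    finally show ?thesis .
  qed
  have XZg: "XZ i \<le> \<zeta> * (gZ (Suc i) - gZ i)" if i: "i < N" for i
  proof -
    have M: "max \<bar>- Z i\<bar> \<bar>- Z (Suc i)\<bar> + \<zeta> * r \<le> \<zeta> * \<rho> i"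
    proof -
      have "\<zeta> * r \<le> \<zeta> * P i" using ptI[OF i] z by (intro mult_left_mono) auto
      moreover have "\<zeta> * r \<le> \<zeta> * P (Suc i)" using ptS[OF i] z by (intro mult_left_mono) auto
      ultimately
      show ?thesis using ptI[OF i] ptS[OF i] unfolding \<rho>_def distrib_left by (auto simp: max_def)
    qed
    have dZ0: "0 \<le> dZ i" using XZ0[OF i] rho[OF i] r unfolding XZ_def by (simp add: zero_le_divide_iff)
    have "XZ i = \<zeta> * (dZ i / (\<zeta> * \<rho> i))" unfolding XZ_def using z by simp
    also have "\<dots> \<le> \<zeta> * (dZ i / (max \<bar>- Z i\<bar> \<bar>- Z (Suc i)\<bar> + \<zeta> * r))"
      using dZ0 M zr z by (intro mult_left_mono divide_left_mono) auto
    also have "\<dots> \<le> \<zeta> * (gZ (Suc i) - gZ i)" unfolding gZ_def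
      using Gp_diff[OF zr, of "- Z i" "- Z (Suc i)"] dZ0 z unfolding dZ_def by (intro mult_left_mono) auto
    finally show ?thesis .
  qed
  have sumC: "(\<Sum>i<N. gC (Suc i) - gC i) \<le> 2 * \<Lambda>"
  proof -
    have "\<bar>gC N\<bar> \<le> \<Lambda>" "\<bar>gC 0\<bar> \<le> \<Lambda>" unfolding gC_def \<Lambda>_def
      using Gp_bound[OF r, of "C N" R] Gp_bound[OF r, of "C 0" R] pt[of N] pt[of 0] by auto
    thus ?thesis by (simp add: sum_lessThan_telescope)
  qed
  have sumZ: "(\<Sum>i<N. gZ (Suc i) - gZ i) \<le> 2 * \<Lambda>"
  proof -
    have e: "ln ((\<zeta> * R + \<zeta> * r) / (\<zeta> * r)) = \<Lambda>" unfolding \<Lambda>_def using z r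
      by (simp add: distrib_left[symmetric])
    have b: "\<bar>- Z j\<bar> \<le> \<zeta> * R" if "j \<le> N" for j
    proof -
      have "\<bar>Z j\<bar> \<le> \<zeta> * P j" "P j \<le> R" using pt[OF that] by auto
      hence "\<bar>Z j\<bar> \<le> \<zeta> * R" using z by (smt (verit) mult_left_mono)
      thus ?thesis by simp
    qed
    have "\<bar>gZ N\<bar> \<le> \<Lambda>" "\<bar>gZ 0\<bar> \<le> \<Lambda>" unfolding gZ_def
      using Gp_bound[OF zr b[of N]] Gp_bound[OF zr b[of 0]] e by auto
    thus ?thesis by (simp add: sum_lessThan_telescope)
  qed
  have hd0: "0 \<le> h (Suc i) - h i" if "i < N" for i
    unfolding h_def using inc[OF that] by (simp add: max_def)
  have hsum: "h N - h 0 \<le> real k * ln 2"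
  proof -
    have "h 0 \<ge> 0" unfolding h_def by simp
    moreover have "max 1 (t N) \<le> 2 ^ k" using pt[of N] by (simp add: one_le_power)
    hence "h N \<le> ln (2 ^ k)" unfolding h_def by simp
    moreover have "ln ((2::real) ^ k) = real k * ln 2" by (simp add: ln_realpow)
    ultimately show ?thesis by linarith
  qed
  have qd0: "0 \<le> q (Suc i) - q i" if "i < N" for i
    unfolding q_def using inc[OF that] by (simp add: min_def)
  have qsum: "q N - q 0 \<le> 2" unfolding q_def using pt[of 0] by (simp add: min_def)
  define E1 where "E1 = {i\<in>{..<N}. 1 \<le> t i \<and> t (Suc i) \<le> 2 * t i}"
  define E2 where "E2 = {i\<in>{..<N}. 1 \<le> t i \<and> 2 * t i < t (Suc i)}"
  define E3 where "E3 = {i\<in>{..<N}. t i < 1 \<and> t (Suc i) \<le> 2}"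
  define E4 where "E4 = {i\<in>{..<N}. t i < 1 \<and> 2 < t (Suc i)}"
  have sub: "E1 \<subseteq> {..<N}" "E2 \<subseteq> {..<N}" "E3 \<subseteq> {..<N}" "E4 \<subseteq> {..<N}"
    unfolding E1_def E2_def E3_def E4_def by auto
  have fins: "finite E1" "finite E2" "finite E3" "finite E4"
    using sub finite_subset by blast+
  have cover: "{..<N} = E1 \<union> E2 \<union> E3 \<union> E4" unfolding E1_def E2_def E3_def E4_def by auto
  have "real N = real (card (E1 \<union> E2 \<union> E3 \<union> E4))" using cover by (metis card_lessThan)
  also have "\<dots> \<le> real (card E1) + real (card E2) + real (card E3) + real (card E4)"
  proof -
    have "card (E1 \<union> E2 \<union> E3 \<union> E4) \<le> card (E1 \<union> E2 \<union> E3) + card E4" by (rule card_Un_le)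
    also have "\<dots> \<le> card (E1 \<union> E2) + card E3 + card E4" using card_Un_le[of "E1 \<union> E2" E3] by simp
    also have "\<dots> \<le> card E1 + card E2 + card E3 + card E4" using card_Un_le[of E1 E2] by simp
    finally show ?thesis by linarith
  qed
  finally have Ntot: "real N \<le> real (card E1) + real (card E2) + real (card E3) + real (card E4)" .
  have c1: "real (card E1) \<le> sqrt (2 * \<zeta> * \<Lambda> * (2 * (real k * ln 2)) / \<kappa>)"
  proof (rule cs_count[OF fins(1) k, of XZ "\<lambda>i. 2 * (h (Suc i) - h i)"])
    fix i assume iE: "i \<in> E1"
    hence i: "i < N" and t1: "1 \<le> t i" and t2: "t (Suc i) \<le> 2 * t i" unfolding E1_def by auto
    show "0 \<le> XZ i" using XZ0[OF i] .
    show "0 \<le> 2 * (h (Suc i) - h i)" using hd0[OF i] by simp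
    have tp: "t i > 0" using t1 by simp
    have "t i * \<kappa> * \<rho> i \<le> t i * (dt i * dC i)" using P1[OF i] tp by (simp add: mult.assoc)
    also have "\<dots> = dt i * (t i * dC i)" by simp
    also have "\<dots> \<le> dt i * dZ i" using P3[OF i] dtp[OF i] by (intro mult_left_mono) auto
    finally have "t i * \<kappa> * \<rho> i \<le> dt i * dZ i" .
    hence kk: "\<kappa> \<le> XZ i * (dt i / t i)" unfolding XZ_def using tp rho[OF i] r
      by (simp add: field_simps)
    define y where "y = t (Suc i) / t i"
    have y1: "1 \<le> y" "y \<le> 2" unfolding y_def using tp t2 inc[OF i] by (auto simp: field_simps)
    have "dt i / t i = y - 1" unfolding y_def dt_def using tp by (simp add: field_simps)
    also have "\<dots> \<le> 2 * (1 - 1 / y)"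
    proof -
      have "(y - 1) * (y - 2) \<le> 0" using y1 by (simp add: mult_nonneg_nonpos)
      hence "y * (y - 1) \<le> 2 * (y - 1)" by (simp add: algebra_simps)
      thus ?thesis using y1 by (simp add: field_simps)
    qed
    also have "\<dots> \<le> 2 * ln y" using ln_ge_1_minus_inv[of y] y1 by simp
    also have "ln y = h (Suc i) - h i" unfolding h_def y_def using t1 inc[OF i] tp
      by (simp add: ln_div max_def)
    finally have "dt i / t i \<le> 2 * (h (Suc i) - h i)" .
    thus "\<kappa> \<le> XZ i * (2 * (h (Suc i) - h i))" using kk XZ0[OF i] by (smt (verit) mult_left_mono)
  next
    have "sum XZ E1 \<le> (\<Sum>i<N. XZ i)" by (rule sum_subset_le[of N XZ E1, OF XZ0 sub(1)])
    also have "\<dots> \<le> (\<Sum>i<N. \<zeta> * (gZ (Suc i) - gZ i))" by (rule sum_mono) (use XZg in auto)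
    also have "\<dots> \<le> \<zeta> * (2 * \<Lambda>)" using sumZ z by (simp add: sum_distrib_left[symmetric])
    finally show "sum XZ E1 \<le> 2 * \<zeta> * \<Lambda>" by simp
  next
    have "(\<Sum>i\<in>E1. 2 * (h (Suc i) - h i)) = 2 * (\<Sum>i\<in>E1. h (Suc i) - h i)" by (simp add: sum_distrib_left)
    also have "\<dots> \<le> 2 * (h N - h 0)" using telescope_subset[of N h E1, OF hd0 sub(1)] by simp
    also have "\<dots> \<le> 2 * (real k * ln 2)" using hsum by simp
    finally show "(\<Sum>i\<in>E1. 2 * (h (Suc i) - h i)) \<le> 2 * (real k * ln 2)" .
  next
    show "0 \<le> 2 * \<zeta> * \<Lambda>" using z \<Lambda>0 by simp
    show "0 \<le> 2 * (real k * ln 2)" by simp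
  qed
  have c2: "real (card E2) \<le> real k"
  proof -
    have "(\<Sum>i\<in>E2. ln 2) \<le> (\<Sum>i\<in>E2. h (Suc i) - h i)"
    proof (rule sum_mono)
      fix i assume "i \<in> E2"
      hence i: "i < N" and t1: "1 \<le> t i" and t2: "2 * t i < t (Suc i)" unfolding E2_def by auto
      have "h (Suc i) - h i = ln (t (Suc i) / t i)" unfolding h_def using t1 t2
        by (simp add: ln_div max_def)
      moreover have "2 \<le> t (Suc i) / t i" using t1 t2 by (simp add: field_simps)
      ultimately show "ln 2 \<le> h (Suc i) - h i" by simp
    qed
    also have "\<dots> \<le> h N - h 0" by (rule telescope_subset[of N h E2, OF hd0 sub(2)])
    finally have a: "(\<Sum>i\<in>E2. ln 2) \<le> h N - h 0" .
    have "(\<Sum>i\<in>E2. ln (2::real)) = real (card E2) * ln 2" by simp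
    hence "real (card E2) * ln 2 \<le> real k * ln 2" using a hsum by linarith
    thus ?thesis using mult_le_cancel_right_pos[of "ln (2::real)"] by simp
  qed
  have c3: "real (card E3) \<le> sqrt (2 * \<Lambda> * 2 / \<kappa>)"
  proof (rule cs_count[OF fins(3) k, of XC "\<lambda>i. q (Suc i) - q i"])
    fix i assume iE: "i \<in> E3"
    hence i: "i < N" and t1: "t i < 1" and t2: "t (Suc i) \<le> 2" unfolding E3_def by auto
    show "0 \<le> XC i" using XC0[OF i] .
    show "0 \<le> q (Suc i) - q i" using qd0[OF i] .
    have "q (Suc i) - q i = dt i" unfolding q_def dt_def using t1 t2 by simp
    moreover have "\<kappa> \<le> XC i * dt i" using P1[OF i] rho[OF i] r unfolding XC_def
      by (simp add: field_simps)
    ultimately show "\<kappa> \<le> XC i * (q (Suc i) - q i)" by simp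
  next
    have "sum XC E3 \<le> (\<Sum>i<N. XC i)" by (rule sum_subset_le[of N XC E3, OF XC0 sub(3)])
    also have "\<dots> \<le> (\<Sum>i<N. gC (Suc i) - gC i)" by (rule sum_mono) (use XCg in auto)
    finally show "sum XC E3 \<le> 2 * \<Lambda>" using sumC by linarith
  next
    show "(\<Sum>i\<in>E3. q (Suc i) - q i) \<le> 2" using telescope_subset[of N q E3, OF qd0 sub(3)] qsum by linarith
  next
    show "0 \<le> 2 * \<Lambda>" using \<Lambda>0 by simp
    show "0 \<le> (2::real)" by simp
  qed
  have c4: "real (card E4) \<le> 2"
  proof -
    have "(\<Sum>i\<in>E4. 1) \<le> (\<Sum>i\<in>E4. q (Suc i) - q i)"
    proof (rule sum_mono)
      fix i assume "i \<in> E4"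
      hence "t i < 1" "2 < t (Suc i)" unfolding E4_def by auto
      thus "1 \<le> q (Suc i) - q i" unfolding q_def by simp
    qed
    also have "\<dots> \<le> q N - q 0" by (rule telescope_subset[of N q E4, OF qd0 sub(4)])
    finally show ?thesis using qsum by simp
  qed
  have e1: "2 * \<zeta> * \<Lambda> * (2 * (real k * ln 2)) / \<kappa> = 4 * \<zeta> * \<Lambda> * (real k * ln 2) / \<kappa>" by simp
  have e3: "2 * \<Lambda> * 2 / \<kappa> = 4 * \<Lambda> / \<kappa>" by simp
  have s1: "sqrt (2 * \<zeta> * \<Lambda> * (2 * (real k * ln 2)) / \<kappa>) = sqrt (4 * \<zeta> * \<Lambda> * (real k * ln 2) / \<kappa>)"
    using e1 by (rule arg_cong)
  have s3: "sqrt (2 * \<Lambda> * 2 / \<kappa>) = sqrt (4 * \<Lambda> / \<kappa>)" using e3 by (rule arg_cong)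
  have "real N \<le> 2 + real k + sqrt (4 * \<zeta> * \<Lambda> * (real k * ln 2) / \<kappa>) + sqrt (4 * \<Lambda> / \<kappa>)"
    using Ntot c1 c2 c3 c4 s1 s3 by linarith
  thus ?thesis unfolding \<Lambda>_def .
qed



lemma final_arith:
  fixes k :: nat and \<zeta> d \<kappa> R r :: real
  assumes r: "r > 0" and R: "R > r" and k: "\<kappa> > 0" and z: "\<zeta> > 0" and d: "d \<ge> 1"
    and H: "(10 * log 2 (R / r) + 16) * \<kappa> \<le> d"
  shows "3 + real k + sqrt (4 * \<zeta> * ln ((R + r) / r) * (real k * ln 2) / \<kappa>)
           + sqrt (4 * ln ((R + r) / r) / \<kappa>)
         \<le> 2 * sqrt ((128 * log 2 (R / r) + 208) * (5 * real k + 58) * (\<zeta> + d) / \<kappa>) + 4 * real k + 2"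
proof -
  define L where "L = log 2 (R / r)"
  define \<Lambda> where "\<Lambda> = ln ((R + r) / r)"
  define Big where "Big = (128 * L + 208) * (5 * real k + 58) * (\<zeta> + d) / \<kappa>"
  have Rr: "R / r > 1" using r R by simp
  have lnRr: "0 \<le> ln (R / r)" using Rr by simp
  have L0: "0 \<le> L" unfolding L_def using Rr by simp
  have ln2: "0 < ln (2::real)" "ln (2::real) < 1" using ln_2_less_1 by auto
  have lnL: "ln (R / r) \<le> L"
  proof -
    have "L * ln 2 = ln (R / r)" unfolding L_def using ln2 by (simp add: log_def)
    moreover have "L * ln 2 \<le> L * 1" using L0 ln2 by (intro mult_left_mono) auto
    ultimately show ?thesis by simp
  qed
  have \<Lambda>0: "0 \<le> \<Lambda>" unfolding \<Lambda>_def using r R by simp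
  have \<Lambda>L: "\<Lambda> \<le> 1 + L"
  proof -
    have "(R + r) / r \<le> 2 * (R / r)" using r R by (simp add: field_simps)
    hence "\<Lambda> \<le> ln (2 * (R / r))" unfolding \<Lambda>_def using r R by simp
    also have "\<dots> = ln 2 + ln (R / r)" using r R by (intro ln_mult_pos) auto
    finally show ?thesis using lnL ln2 by linarith
  qed
  have num_a: "4 * \<zeta> * \<Lambda> * (real k * ln 2) \<le> (128 * L + 208) * (5 * real k + 58) * (\<zeta> + d)"
  proof -
    have "4 * \<zeta> * \<Lambda> * (real k * ln 2) \<le> 4 * \<zeta> * (1 + L) * (real k * 1)"
      using z \<Lambda>0 \<Lambda>L ln2 by (intro mult_mono) auto
    also have "\<dots> = (4 * (1 + L)) * real k * \<zeta>" by simp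
    also have "\<dots> \<le> (128 * L + 208) * (5 * real k + 58) * (\<zeta> + d)"
      using L0 z d by (intro mult_mono) auto
    finally show ?thesis .
  qed
  have num_b: "4 * \<Lambda> \<le> (128 * L + 208) * (5 * real k + 58) * (\<zeta> + d)"
  proof -
    have "4 * \<Lambda> \<le> (4 * (1 + L)) * 1 * 1" using \<Lambda>L by simp
    also have "\<dots> \<le> (128 * L + 208) * (5 * real k + 58) * (\<zeta> + d)"
      using L0 z d by (intro mult_mono) auto
    finally show ?thesis .
  qed
  have a: "4 * \<zeta> * \<Lambda> * (real k * ln 2) / \<kappa> \<le> Big" unfolding Big_def
    using num_a k by (intro divide_right_mono) auto
  have b: "4 * \<Lambda> / \<kappa> \<le> Big" unfolding Big_def using num_b k by (intro divide_right_mono) auto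
  have big1: "1 \<le> Big"
  proof -
    have "16 * \<kappa> \<le> (10 * L + 16) * \<kappa>" using L0 k by (intro mult_right_mono) auto
    hence "16 * \<kappa> \<le> d" using H unfolding L_def by linarith
    hence "1 \<le> d / \<kappa>" using k by (simp add: field_simps)
    also have "d / \<kappa> \<le> ((128 * L + 208) * (5 * real k + 58) * (\<zeta> + d)) / \<kappa>"
    proof -
      have "d = 1 * 1 * d" by simp
      also have "\<dots> \<le> (128 * L + 208) * (5 * real k + 58) * (\<zeta> + d)"
        using L0 z d by (intro mult_mono) auto
      finally show ?thesis using k by (intro divide_right_mono) auto
    qed
    finally show ?thesis unfolding Big_def .
  qed
  have sa: "sqrt (4 * \<zeta> * \<Lambda> * (real k * ln 2) / \<kappa>) \<le> sqrt Big" using a by simp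
  have sb: "sqrt (4 * \<Lambda> / \<kappa>) \<le> sqrt Big" using b by simp
  have s1: "1 \<le> sqrt Big" using big1 by simp
  have "3 + real k + sqrt (4 * \<zeta> * \<Lambda> * (real k * ln 2) / \<kappa>) + sqrt (4 * \<Lambda> / \<kappa>)
        \<le> 2 * sqrt Big + 4 * real k + 2"
  proof (cases "k = 0")
    case True
    hence "sqrt (4 * \<zeta> * \<Lambda> * (real k * ln 2) / \<kappa>) = 0" "real k = 0" by simp_all
    thus ?thesis using sb s1 by linarith
  next
    case False
    hence "1 \<le> real k" by simp
    thus ?thesis using sa sb by linarith
  qed
  thus ?thesis unfolding Big_def L_def \<Lambda>_def .
qed



lemma seg_param:
  fixes z c w :: "real^'d"
  assumes "w \<in> closed_segment z (2 ^ k *\<^sub>R c + z)"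
  shows "\<exists>tt. 0 \<le> tt \<and> tt \<le> 2 ^ k \<and> w = z + tt *\<^sub>R c"
proof -
  obtain u where u: "0 \<le> u" "u \<le> 1" "w = (1 - u) *\<^sub>R z + u *\<^sub>R (2 ^ k *\<^sub>R c + z)"
    using assms unfolding closed_segment_def by blast
  have "w = z + (u * 2 ^ k) *\<^sub>R c" using u(3) by (simp add: algebra_simps)
  moreover have "u * 2 ^ k \<le> (2::real) ^ k" using u by (simp add: mult_left_le_one_le)
  ultimately show ?thesis using u by (intro exI[of _ "u * 2 ^ k"]) auto
qed

theorem lemma4p22:
  fixes A :: "real^'d^'n" and b :: "real^'n" and z c :: "real^'d"
    and g m R r :: real and k :: nat
  assumes "independent {z, c}" and "z \<noteq> c" and "norm c = 1"
    and "nondegenerate A b z (2 ^ k *\<^sub>R c + z)"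
    and "g > 0" and "m > 0" and "r > 0" and "R > r"
    and "(10 * log 2 (R / r) + 16) * g * m \<le> real CARD('d)"
  shows "real (card (Tset A b z (2 ^ k *\<^sub>R c + z)
             (Gset A b g \<inter> Mset A z (2 ^ k *\<^sub>R c + z) m)))
    \<le> 2 * sqrt ((128 * log 2 (R / r) + 208) * (5 * real k + 58) * (norm z + real CARD('d)) / (g * m))
      + real (card {I \<in> Fset A b. norm (proj2 c z (xI A b I)) \<notin> {r..R}})
      + 4 * real k + 2"
proof -
  note indep = assms(1) and nc = assms(3) and gp = assms(5) and mp = assms(6)
    and rp = assms(7) and Rr = assms(8) and H = assms(9)
  define S where "S = Gset A b g \<inter> Mset A z (2 ^ k *\<^sub>R c + z) m"
  define Fb where "Fb = {I \<in> Fset A b. norm (proj2 c z (xI A b I)) \<notin> {r..R}}"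
  define S' where "S' = {I \<in> S. norm (proj2 c z (xI A b I)) \<in> {r..R}}"
  define \<kappa> where "\<kappa> = g * m"
  define X where "X I = xI A b I" for I
  define P where "P I = norm (proj2 c z (X I))" for I
  have kp: "\<kappa> > 0" using gp mp by (simp add: \<kappa>_def)
  have finall: "finite (Q :: 'n set set)" for Q by (rule finite_subset[OF subset_UNIV]) simp
  have T_sub: "Tset A b z (2 ^ k *\<^sub>R c + z) S \<subseteq> S' \<union> Fb"
    unfolding Tset_def S'_def Fb_def S_def Gset_def by auto
  have cardT: "card (Tset A b z (2 ^ k *\<^sub>R c + z) S) \<le> card S' + card Fb"
  proof -
    have "card (Tset A b z (2 ^ k *\<^sub>R c + z) S) \<le> card (S' \<union> Fb)"
      by (rule card_mono[OF finall T_sub])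
    also have "\<dots> \<le> card S' + card Fb" by (rule card_Un_le)
    finally show ?thesis .
  qed
  have S'G: "I \<in> Gset A b g" and S'inv: "invertible_sub A I" and S'P: "r \<le> P I \<and> P I \<le> R"
    if "I \<in> S'" for I
    using that unfolding S'_def S_def Gset_def Fset_def P_def X_def by auto
  have "\<exists>tt. 0 \<le> tt \<and> tt \<le> 2 ^ k \<and> dual_ge A I (z + tt *\<^sub>R c) m" if IS: "I \<in> S'" for I
  proof -
    obtain w where w: "w \<in> closed_segment z (2 ^ k *\<^sub>R c + z)" "dual_ge A I w m"
      using IS unfolding S'_def S_def Mset_def by auto
    then obtain tt where "0 \<le> tt" "tt \<le> 2 ^ k" "w = z + tt *\<^sub>R c" using seg_param by blast
    thus ?thesis using w by blast
  qed
  then obtain tf where tf: "\<And>I. I \<in> S' \<Longrightarrow> 0 \<le> tf I \<and> tf I \<le> 2 ^ k \<and> dual_ge A I (z + tf I *\<^sub>R c) m"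
    by metis
  have pairI: "\<kappa> * P J \<le> z \<bullet> X I - z \<bullet> X J + tf I * (c \<bullet> X I - c \<bullet> X J)"
    if IJ: "I \<in> S'" "J \<in> S'" "I \<noteq> J" for I J
  proof -
    have "m * g * norm (X J) \<le> (z + tf I *\<^sub>R c) \<bullet> (X I - X J)"
      unfolding X_def using pair_ineq[OF S'inv[OF IJ(1)] conjunct2[OF conjunct2[OF tf[OF IJ(1)]]] _ S'G[OF IJ(2)] _ IJ(3)]
        mp gp by simp
    moreover have "P J \<le> norm (X J)" unfolding P_def using proj2_facts(3) .
    hence "\<kappa> * P J \<le> \<kappa> * norm (X J)" using kp by (intro mult_left_mono) auto
    hence "\<kappa> * P J \<le> m * g * norm (X J)" unfolding \<kappa>_def by (simp add: mult.commute)
    moreover have "(z + tf I *\<^sub>R c) \<bullet> (X I - X J) = z \<bullet> X I - z \<bullet> X J + tf I * (c \<bullet> X I - c \<bullet> X J)"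
      by (simp add: inner_add_left inner_diff_right algebra_simps)
    ultimately show ?thesis by linarith
  qed
  have Ppos: "P I > 0" if "I \<in> S'" for I using S'P[OF that] rp by linarith
  have inj: "inj_on tf S'"
  proof (rule inj_onI, rule ccontr)
    fix I J assume IJ: "I \<in> S'" "J \<in> S'" "tf I = tf J" "I \<noteq> J"
    have "\<kappa> * P J \<le> z \<bullet> X I - z \<bullet> X J + tf I * (c \<bullet> X I - c \<bullet> X J)" using pairI IJ by blast
    moreover have "\<kappa> * P I \<le> z \<bullet> X J - z \<bullet> X I + tf J * (c \<bullet> X J - c \<bullet> X I)" using pairI IJ by metis
    moreover have "tf J * (c \<bullet> X J - c \<bullet> X I) = - (tf I * (c \<bullet> X I - c \<bullet> X J))"
      using IJ(3) by (simp add: algebra_simps)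
    moreover have "0 < \<kappa> * P I" "0 < \<kappa> * P J" using kp Ppos IJ by auto
    ultimately show False by linarith
  qed
  define U where "U = tf ` S'"
  define xs where "xs = sorted_list_of_set U"
  have finU: "finite U" unfolding U_def using finall by simp
  have setxs: "set xs = U" unfolding xs_def using finU by simp
  have lenxs: "length xs = card S'" unfolding xs_def using finU card_image[OF inj] U_def by simp
  have strict: "sorted_wrt (<) xs" unfolding xs_def by simp
  define Ib where "Ib i = inv_into S' tf (xs ! i)" for i
  have IbS: "Ib i \<in> S'" and tIb: "tf (Ib i) = xs ! i" if "i < length xs" for i
  proof -
    have "xs ! i \<in> tf ` S'" using that setxs U_def nth_mem by metis
    thus "Ib i \<in> S'" "tf (Ib i) = xs ! i" unfolding Ib_def by (auto intro: inv_into_into f_inv_into_f)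
  qed
  have zn: "z \<noteq> 0" using indep dependent_zero by blast
  have zpos: "norm z > 0" using zn by simp
  have dge1: "real CARD('d) \<ge> 1" by simp
  have Hk: "(10 * log 2 (R / r) + 16) * \<kappa> \<le> real CARD('d)" using H unfolding \<kappa>_def by (simp add: mult.assoc)
  have main: "real (card S') \<le> 3 + real k + sqrt (4 * norm z * ln ((R + r) / r) * (real k * ln 2) / \<kappa>)
           + sqrt (4 * ln ((R + r) / r) / \<kappa>)"
  proof (cases "card S' = 0")
    case True
    have L0: "0 \<le> ln ((R + r) / r)" using rp Rr by simp
    have "0 \<le> 4 * norm z * ln ((R + r) / r) * (real k * ln 2) / \<kappa>" using L0 kp by simp
    hence "0 \<le> sqrt (4 * norm z * ln ((R + r) / r) * (real k * ln 2) / \<kappa>)" by simp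
    moreover have "0 \<le> 4 * ln ((R + r) / r) / \<kappa>" using L0 kp by simp
    hence "0 \<le> sqrt (4 * ln ((R + r) / r) / \<kappa>)" by simp
    ultimately show ?thesis using True by simp
  next
    case False
    define N where "N = card S' - 1"
    have NS: "card S' = Suc N" unfolding N_def using False by linarith
    define t where "t i = xs ! i" for i
    define Cq where "Cq i = c \<bullet> X (Ib i)" for i
    define Zq where "Zq i = z \<bullet> X (Ib i)" for i
    define Pq where "Pq i = P (Ib i)" for i
    have "real N \<le> 2 + real k + sqrt (4 * norm z * ln ((R + r) / r) * (real k * ln 2) / \<kappa>)
           + sqrt (4 * ln ((R + r) / r) / \<kappa>)"
    proof (rule seq_count[OF rp less_imp_le[OF Rr] kp zpos])
      fix i assume i: "i \<le> N"
      hence il: "i < length xs" using lenxs NS by simp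
      have I: "Ib i \<in> S'" using IbS[OF il] .
      have t: "0 \<le> t i \<and> t i \<le> 2 ^ k" using tf[OF I] tIb[OF il] unfolding t_def by simp
      have c1: "\<bar>Cq i\<bar> \<le> Pq i"
      proof -
        have "Cq i = c \<bullet> proj2 c z (X (Ib i))" unfolding Cq_def using proj2_facts(1) .
        also have "\<bar>\<dots>\<bar> \<le> norm c * norm (proj2 c z (X (Ib i)))" by (rule Cauchy_Schwarz_ineq2)
        finally show ?thesis unfolding Pq_def P_def using nc by simp
      qed
      have z1: "\<bar>Zq i\<bar> \<le> norm z * Pq i"
      proof -
        have "Zq i = z \<bullet> proj2 c z (X (Ib i))" unfolding Zq_def using proj2_facts(2) .
        also have "\<bar>\<dots>\<bar> \<le> norm z * norm (proj2 c z (X (Ib i)))" by (rule Cauchy_Schwarz_ineq2)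
        finally show ?thesis unfolding Pq_def P_def by simp
      qed
      show "0 \<le> t i \<and> t i \<le> 2 ^ k \<and> r \<le> Pq i \<and> Pq i \<le> R \<and> \<bar>Cq i\<bar> \<le> Pq i \<and> \<bar>Zq i\<bar> \<le> norm z * Pq i"
        using t c1 z1 S'P[OF I] unfolding Pq_def by simp
    next
      fix i assume i: "i < N"
      hence il: "i < length xs" "Suc i < length xs" using lenxs NS by simp_all
      show "t i < t (Suc i)" unfolding t_def using sorted_wrt_nth_less[OF strict _ il(2), of i] by simp
    next
      fix i assume i: "i < N"
      hence il: "i < length xs" "Suc i < length xs" using lenxs NS by simp_all
      have tl: "xs ! i < xs ! Suc i" using sorted_wrt_nth_less[OF strict _ il(2), of i] by simp
      have ne: "Ib i \<noteq> Ib (Suc i)" using tIb[OF il(1)] tIb[OF il(2)] tl by auto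
      show "\<kappa> * Pq (Suc i) \<le> Zq i - Zq (Suc i) + t i * (Cq i - Cq (Suc i))"
        using pairI[OF IbS[OF il(1)] IbS[OF il(2)] ne] tIb[OF il(1)]
        unfolding Pq_def Zq_def Cq_def t_def by simp
      show "\<kappa> * Pq i \<le> Zq (Suc i) - Zq i + t (Suc i) * (Cq (Suc i) - Cq i)"
        using pairI[OF IbS[OF il(2)] IbS[OF il(1)] ne[symmetric]] tIb[OF il(2)]
        unfolding Pq_def Zq_def Cq_def t_def by simp
    qed
    thus ?thesis using NS by simp
  qed
  have fin_ar: "3 + real k + sqrt (4 * norm z * ln ((R + r) / r) * (real k * ln 2) / \<kappa>)
           + sqrt (4 * ln ((R + r) / r) / \<kappa>)
         \<le> 2 * sqrt ((128 * log 2 (R / r) + 208) * (5 * real k + 58) * (norm z + real CARD('d)) / \<kappa>) + 4 * real k + 2"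
    by (rule final_arith[OF rp Rr kp zpos dge1 Hk])
  have "real (card (Tset A b z (2 ^ k *\<^sub>R c + z) S)) \<le> real (card S') + real (card Fb)"
    using cardT by simp
  thus ?thesis using main fin_ar unfolding S_def Fb_def \<kappa>_def by linarith
qed

end
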